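(* Let $N\ge1$, $M\ge N$, $K=N+M$, $\sigma>0$, $\bm S_{\rm enc}\in{\rm Sp}(2K,\mathbb R)$, and let $\bm\Lambda_d\in{\rm Sp}(2N,\mathbb R)$, $\bm\Lambda_a\in{\rm Sp}(2M,\mathbb R)$, $G_1,\dots,G_N\ge1$ be such that $(\bm\Lambda_d\oplus\bm\Lambda_a)\bm S_{\rm enc}^{-1}\bm S_{\rm enc}^{-\top}(\bm\Lambda_d\oplus\bm\Lambda_a)^\top=\bm T_{\bm G}\bm T_{\bm G}^\top$. Let $\bm\xi\sim\mathcal N(0,\sigma^2\bm I_{2K})$ and $\bm y=(\bm y_d,\bm y_a)=(\bm\Lambda_d\oplus\bm\Lambda_a)\bm S_{\rm enc}^{-1}\bm\xi$ with $\bm y_d\in\mathbb R^{2N}$, $\bm y_a\in\mathbb R^{2M}$. Then for every measurable $\bm f:\mathbb R^{2M}\to\mathbb R^{2N}$, $$\mathbb E\big[\|\bm y_d-\bm f(\bm y_a)\|^2\big]\ \ge\ \sum_{i=1}^N\frac{2\sigma^2}{2G_i-1}.$$ Consequently, the residual data error of any Gaussian-encoded oscillator-to-oscillator code (with any ancilla state and any decoder, expressed in this frame) cannot be made arbitrarily small at bounded gains, regardless of the number $M$ of ancilla modes.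
   Context: Phase-space vectors ordered $(q_1,p_1,\dots)$; $\bm\Omega=\bigoplus\begin{pmatrix}0&1\\-1&0\end{pmatrix}$; ${\rm Sp}(2n,\mathbb R)=\{\bm S:\bm S\bm\Omega\bm S^\top=\bm\Omega\}$. The first $N$ modes are data modes, the last $M$ ancilla modes. $\bm S_G=\begin{pmatrix}\sqrt G\bm I_2&\sqrt{G-1}\bm Z\\ \sqrt{G-1}\bm Z&\sqrt G\bm I_2\end{pmatrix}$ with $\bm Z={\rm diag}(1,-1)$, $G\ge1$; $\bm T_{\bm G}\in{\rm Sp}(2K,\mathbb R)$ acts as $\bm S_{G_i}$ on the pair (data mode $i$, ancilla mode $i$) for $i\le N$ and as the identity on ancilla modes $N+1,\dots,M$. (Such $\bm\Lambda_d,\bm\Lambda_a,G_i$ always exist.) *)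

theory Defs
  imports "HOL-Probability.Probability" "Jordan_Normal_Form.Matrix"
begin

text \<open>Phase-space coordinates are indexed from 0: mode k occupies coordinates 2k (q) and 2k+1 (p).
  The standard symplectic form Omega = direct sum of n copies of [[0,1],[-1,0]].\<close>
definition Omega :: "nat \<Rightarrow> real mat" where
  "Omega n = mat (2*n) (2*n) (\<lambda>(i,j).
     if even i \<and> j = i + 1 then 1
     else if odd i \<and> i = j + 1 then -1 else 0)"

definition symplectic :: "nat \<Rightarrow> real mat \<Rightarrow> bool" where
  "symplectic n S \<longleftrightarrow> S \<in> carrier_mat (2*n) (2*n) \<and> S * Omega n * transpose_mat S = Omega n"

definition dsum :: "real mat \<Rightarrow> real mat \<Rightarrow> real mat" where
  "dsum A B = four_block_mat A (0\<^sub>m (dim_row A) (dim_col B)) (0\<^sub>m (dim_row B) (dim_col A)) B"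

text \<open>Sign of the Z = diag(1,-1) entry on component a (0 = q, 1 = p).\<close>
definition zsgn :: "nat \<Rightarrow> real" where
  "zsgn a = (if a = 0 then 1 else -1)"

text \<open>T_G on N data modes followed by M ancilla modes (K = N + M): acts as the two-mode squeezer
  S_{G_i} on (data mode i, ancilla mode i) for i < N and as identity on ancilla modes N..M-1.
  Data coordinate r < 2N belongs to data mode r div 2; ancilla coordinate 2N + s belongs to
  ancilla mode s div 2.\<close>
definition TG :: "nat \<Rightarrow> nat \<Rightarrow> (nat \<Rightarrow> real) \<Rightarrow> real mat" where
  "TG N M G = mat (2*(N+M)) (2*(N+M)) (\<lambda>(r,c).
     if r < 2*N then
       (if c = r then sqrt (G (r div 2))
        else if c = 2*N + r then sqrt (G (r div 2) - 1) * zsgn (r mod 2) else 0)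
     else if r < 4*N then
       (if c = r then sqrt (G ((r - 2*N) div 2))
        else if c = r - 2*N then sqrt (G ((r - 2*N) div 2) - 1) * zsgn (r mod 2) else 0)
     else (if c = r then 1 else 0))"

end

theory Submission
  imports Defs
begin


lemma gauss_moment2:
  fixes m s \<alpha> \<beta> :: real
  assumes "s > 0"
  shows "has_bochner_integral lborel (\<lambda>t. normal_density m s t * (\<alpha>*t+\<beta>)\<^sup>2) (\<alpha>\<^sup>2 * s\<^sup>2 + (\<alpha>*m+\<beta>)\<^sup>2)"
proof -
  have e2: "has_bochner_integral lborel (\<lambda>x. normal_density m s x * (x - m) ^ 2) (s\<^sup>2)"
  proof -
    have "fact (2*1) / ((2 / s\<^sup>2)^1 * fact 1) = (s\<^sup>2::real)" using assms by simp
    with normal_moment_even[OF assms, of m 1] show ?thesis by (simp only: mult_1_right)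
  qed
  have o1: "has_bochner_integral lborel (\<lambda>x. normal_density m s x * (x - m)) 0"
    using normal_moment_odd[OF assms, of m 0] by simp
  have d: "has_bochner_integral lborel (\<lambda>x. normal_density m s x) 1"
    using integrable_normal_density[OF assms] integral_normal_density[OF assms]
    by (metis has_bochner_integral_integrable integrable.cases has_bochner_integral_integral_eq)
  have "has_bochner_integral lborel (\<lambda>x. \<alpha>\<^sup>2 * (normal_density m s x * (x - m) ^ 2)
     + (2*\<alpha>*(\<alpha>*m+\<beta>)) * (normal_density m s x * (x - m)) + (\<alpha>*m+\<beta>)\<^sup>2 * normal_density m s x)
     (\<alpha>\<^sup>2 * s\<^sup>2 + (2*\<alpha>*(\<alpha>*m+\<beta>)) * 0 + (\<alpha>*m+\<beta>)\<^sup>2 * 1)"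
    by (intro has_bochner_integral_add has_bochner_integral_mult_right e2 o1 d)
  moreover have "(\<lambda>x. \<alpha>\<^sup>2 * (normal_density m s x * (x - m) ^ 2)
     + (2*\<alpha>*(\<alpha>*m+\<beta>)) * (normal_density m s x * (x - m)) + (\<alpha>*m+\<beta>)\<^sup>2 * normal_density m s x)
     = (\<lambda>t. normal_density m s t * (\<alpha>*t+\<beta>)\<^sup>2)"
    by (auto simp: fun_eq_iff power2_eq_square algebra_simps)
  ultimately show ?thesis by simp
qed

lemma gauss1d:
  fixes \<alpha> \<beta> a b c C \<sigma> :: real
  assumes "\<sigma>>0" "a>0" "C \<ge> 0"
  shows "ennreal (\<alpha>\<^sup>2 * \<sigma>\<^sup>2 / a) * (\<integral>\<^sup>+t. ennreal (C * exp (-(a*t\<^sup>2 + 2*b*t + c)/(2*\<sigma>\<^sup>2))) \<partial>lborel)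
     \<le> (\<integral>\<^sup>+t. ennreal (C * ((\<alpha>*t+\<beta>)\<^sup>2 * exp (-(a*t\<^sup>2 + 2*b*t + c)/(2*\<sigma>\<^sup>2)))) \<partial>lborel)"
proof -
  define s where "s = \<sigma> / sqrt a"
  define m where "m = -b/a"
  define D where "D = C * exp(-(c - b\<^sup>2/a)/(2*\<sigma>\<^sup>2)) * sqrt(2 * pi * s\<^sup>2)"
  have s: "s > 0" using assms by (simp add: s_def)
  have s2: "s\<^sup>2 = \<sigma>\<^sup>2 / a" using assms by (simp add: s_def power_divide)
  have D0: "D \<ge> 0" using assms by (simp add: D_def)
  have E: "C * exp (-(a*t\<^sup>2 + 2*b*t + c)/(2*\<sigma>\<^sup>2)) = D * normal_density m s t" for t
  proof -
    have "D * normal_density m s t = C * (exp(-(c - b\<^sup>2/a)/(2*\<sigma>\<^sup>2)) * exp (-(t - m)\<^sup>2/ (2 * s\<^sup>2)))"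
      using s by (simp add: D_def normal_density_def)
    also have "exp(-(c - b\<^sup>2/a)/(2*\<sigma>\<^sup>2)) * exp (-(t - m)\<^sup>2/ (2 * s\<^sup>2)) = exp (-(a*t\<^sup>2 + 2*b*t + c)/(2*\<sigma>\<^sup>2))"
      unfolding exp_add[symmetric] s2 m_def using assms
      by (intro arg_cong[where f=exp]) (simp add: field_simps power2_eq_square)
    finally show ?thesis by simp
  qed
  have L: "(\<integral>\<^sup>+t. ennreal (C * exp (-(a*t\<^sup>2 + 2*b*t + c)/(2*\<sigma>\<^sup>2))) \<partial>lborel) = ennreal D"
  proof -
    have "(\<integral>\<^sup>+t. ennreal (C * exp (-(a*t\<^sup>2 + 2*b*t + c)/(2*\<sigma>\<^sup>2))) \<partial>lborel)
       = (\<integral>\<^sup>+t. ennreal D * ennreal (normal_density m s t) \<partial>lborel)"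
      by (rule nn_integral_cong) (simp only: E ennreal_mult[OF D0 normal_density_nonneg])
    also have "\<dots> = ennreal D * (\<integral>\<^sup>+t. ennreal (normal_density m s t) \<partial>lborel)"
      by (simp add: nn_integral_cmult)
    also have "(\<integral>\<^sup>+t. ennreal (normal_density m s t) \<partial>lborel) = 1"
      using s by (subst nn_integral_eq_integral) auto
    finally show ?thesis by simp
  qed
  have R: "(\<integral>\<^sup>+t. ennreal (C * ((\<alpha>*t+\<beta>)\<^sup>2 * exp (-(a*t\<^sup>2 + 2*b*t + c)/(2*\<sigma>\<^sup>2)))) \<partial>lborel)
     = ennreal D * ennreal (\<alpha>\<^sup>2 * s\<^sup>2 + (\<alpha>*m+\<beta>)\<^sup>2)"
  proof -
    have "(\<integral>\<^sup>+t. ennreal (C * ((\<alpha>*t+\<beta>)\<^sup>2 * exp (-(a*t\<^sup>2 + 2*b*t + c)/(2*\<sigma>\<^sup>2)))) \<partial>lborel)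
       = (\<integral>\<^sup>+t. ennreal D * ennreal (normal_density m s t * (\<alpha>*t+\<beta>)\<^sup>2) \<partial>lborel)"
    proof (rule nn_integral_cong)
      fix t
      have "C * ((\<alpha>*t+\<beta>)\<^sup>2 * exp (-(a*t\<^sup>2 + 2*b*t + c)/(2*\<sigma>\<^sup>2))) = D * (normal_density m s t * (\<alpha>*t+\<beta>)\<^sup>2)"
        using E[of t] by (simp add: algebra_simps)
      then show "ennreal (C * ((\<alpha>*t+\<beta>)\<^sup>2 * exp (-(a*t\<^sup>2 + 2*b*t + c)/(2*\<sigma>\<^sup>2)))) = ennreal D * ennreal (normal_density m s t * (\<alpha>*t+\<beta>)\<^sup>2)"
        by (simp only: ennreal_mult[OF D0 mult_nonneg_nonneg[OF normal_density_nonneg zero_le_power2]])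
    qed
    also have "\<dots> = ennreal D * (\<integral>\<^sup>+t. ennreal (normal_density m s t * (\<alpha>*t+\<beta>)\<^sup>2) \<partial>lborel)"
      by (simp add: nn_integral_cmult)
    also have "(\<integral>\<^sup>+t. ennreal (normal_density m s t * (\<alpha>*t+\<beta>)\<^sup>2) \<partial>lborel) = ennreal (\<alpha>\<^sup>2 * s\<^sup>2 + (\<alpha>*m+\<beta>)\<^sup>2)"
      using gauss_moment2[OF s, of m \<alpha> \<beta>]
      by (subst nn_integral_eq_integral) (auto simp: has_bochner_integral_iff)
    finally show ?thesis .
  qed
  have r: "\<alpha>\<^sup>2 * \<sigma>\<^sup>2 / a * D \<le> D * (\<alpha>\<^sup>2 * s\<^sup>2 + (\<alpha>*m+\<beta>)\<^sup>2)"
  proof -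
    have "D * (\<alpha>\<^sup>2 * s\<^sup>2) \<le> D * (\<alpha>\<^sup>2 * s\<^sup>2 + (\<alpha>*m+\<beta>)\<^sup>2)"
      using D0 by (intro mult_left_mono) auto
    then show ?thesis unfolding s2 by (simp add: mult.commute)
  qed
  have p: "0 \<le> \<alpha>\<^sup>2 * \<sigma>\<^sup>2 / a" using assms by simp
  show ?thesis unfolding L R
    using r by (simp only: ennreal_mult[symmetric, OF p D0] ennreal_mult[symmetric, OF D0 add_nonneg_nonneg[OF mult_nonneg_nonneg[OF zero_le_power2 zero_le_power2] zero_le_power2]] ennreal_leI)
qed


abbreviation Nd :: "real \<Rightarrow> real measure" where
  "Nd \<sigma> \<equiv> density lborel (normal_density 0 \<sigma>)"

lemma sets_PiM_Nd[measurable_cong]: "sets (PiM J (\<lambda>_. Nd \<sigma>)) = sets (PiM J (\<lambda>_. borel::real measure))"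
  by (rule sets_PiM_cong) auto

lemma sets_PiM_lborel[measurable_cong]: "sets (PiM J (\<lambda>_. lborel)) = sets (PiM J (\<lambda>_. borel::real measure))"
  by (rule sets_PiM_cong) auto

lemma prod_Nd: "\<sigma> > 0 \<Longrightarrow> product_sigma_finite (\<lambda>_::nat. Nd \<sigma>)"
proof -
  assume "\<sigma> > 0"
  then interpret prob_space "Nd \<sigma>" by (rule prob_space_normal_density)
  show ?thesis by unfold_locales
qed

lemma prod_lborel: "product_sigma_finite (\<lambda>_::nat. lborel::real measure)"
  by unfold_locales

lemma shift_gauss:
  fixes \<sigma> t :: real and c :: "nat \<Rightarrow> real" and J :: "nat set"
  assumes \<sigma>: "\<sigma> > 0" and J: "finite J"
  shows "G \<in> borel_measurable (PiM J (\<lambda>_. borel)) \<Longrightarrow>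
    (\<integral>\<^sup>+x. G x \<partial>PiM J (\<lambda>_. Nd \<sigma>)) =
    (\<integral>\<^sup>+\<eta>. G (\<lambda>j\<in>J. \<eta> j + t * c j) * (\<Prod>j\<in>J. ennreal (normal_density 0 \<sigma> (\<eta> j + t * c j))) \<partial>PiM J (\<lambda>_. lborel))"
  using J
proof (induction J arbitrary: G rule: finite_induct)
  case empty
  show ?case by (simp add: PiM_empty nn_integral_count_space_finite)
next
  case (insert a J)
  interpret P: product_sigma_finite "\<lambda>_::nat. Nd \<sigma>" by (rule prod_Nd[OF \<sigma>])
  interpret Q: product_sigma_finite "\<lambda>_::nat. lborel::real measure" by (rule prod_lborel)
  note [measurable] = insert.prems
  define H where "H x = (\<integral>\<^sup>+y. ennreal (normal_density 0 \<sigma> (t * c a + y)) * G (x(a := t * c a + y)) \<partial>lborel)" for x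
  have mupd: "(\<lambda>p. (fst p)(a := t * c a + snd p)) \<in> measurable (PiM J (\<lambda>_. borel) \<Otimes>\<^sub>M lborel) (PiM (insert a J) (\<lambda>_. borel))"
    by (rule measurable_fun_upd[where J=J]) auto
  have mG2: "(\<lambda>(x,y). ennreal (normal_density 0 \<sigma> (t * c a + y)) * G (x(a := t * c a + y))) \<in> borel_measurable (PiM J (\<lambda>_. borel) \<Otimes>\<^sub>M lborel)"
    using measurable_compose[OF mupd insert.prems] by (auto simp: case_prod_beta')
  have mH: "H \<in> borel_measurable (PiM J (\<lambda>_. borel))"
    unfolding H_def by (rule lborel.borel_measurable_nn_integral[OF mG2])
  have "(\<integral>\<^sup>+x. G x \<partial>PiM (insert a J) (\<lambda>_. Nd \<sigma>)) = (\<integral>\<^sup>+x. (\<integral>\<^sup>+y. G (x(a := y)) \<partial>Nd \<sigma>) \<partial>PiM J (\<lambda>_. Nd \<sigma>))"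
    using insert by (subst P.product_nn_integral_insert) auto
  also have "\<dots> = (\<integral>\<^sup>+x. H x \<partial>PiM J (\<lambda>_. Nd \<sigma>))"
  proof (rule nn_integral_cong)
    fix x assume x: "x \<in> space (PiM J (\<lambda>_. Nd \<sigma>))"
    have mx: "(\<lambda>y. G (x(a := y))) \<in> borel_measurable borel"
      using measurable_compose[OF measurable_component_update[of x J "\<lambda>_. borel" a] insert.prems] x insert.hyps
      by (simp add: space_PiM)
    have "(\<integral>\<^sup>+y. G (x(a := y)) \<partial>Nd \<sigma>) = (\<integral>\<^sup>+y. ennreal (normal_density 0 \<sigma> y) * G (x(a := y)) \<partial>lborel)"
      using mx by (subst nn_integral_density) auto
    also have "\<dots> = (\<integral>\<^sup>+y. ennreal (normal_density 0 \<sigma> (t * c a + 1 * y)) * G (x(a := t * c a + 1 * y)) \<partial>lborel)"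
      using mx by (subst nn_integral_real_affine[where c=1 and t="t * c a"]) auto
    finally show "(\<integral>\<^sup>+y. G (x(a := y)) \<partial>Nd \<sigma>) = H x" by (simp add: H_def)
  qed
  also have "\<dots> = (\<integral>\<^sup>+\<eta>. H (\<lambda>j\<in>J. \<eta> j + t * c j) * (\<Prod>j\<in>J. ennreal (normal_density 0 \<sigma> (\<eta> j + t * c j))) \<partial>PiM J (\<lambda>_. lborel))"
    by (rule insert.IH[OF mH])
  also have "\<dots> = (\<integral>\<^sup>+\<eta>. (\<integral>\<^sup>+y. G (\<lambda>j\<in>insert a J. (\<eta>(a:=y)) j + t * c j) * (\<Prod>j\<in>insert a J. ennreal (normal_density 0 \<sigma> ((\<eta>(a:=y)) j + t * c j))) \<partial>lborel) \<partial>PiM J (\<lambda>_. lborel))"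
  proof (rule nn_integral_cong)
    fix \<eta> assume \<eta>: "\<eta> \<in> space (PiM J (\<lambda>_. lborel::real measure))"
    have e1: "(\<lambda>j\<in>insert a J. (\<eta>(a:=y)) j + t * c j) = (\<lambda>j\<in>J. \<eta> j + t * c j)(a := t * c a + y)" for y
      using insert.hyps by (auto simp: fun_eq_iff)
    have e2: "(\<Prod>j\<in>insert a J. ennreal (normal_density 0 \<sigma> ((\<eta>(a:=y)) j + t * c j))) =
       ennreal (normal_density 0 \<sigma> (t * c a + y)) * (\<Prod>j\<in>J. ennreal (normal_density 0 \<sigma> (\<eta> j + t * c j)))" for y
    proof -
      have "(\<Prod>j\<in>J. ennreal (normal_density 0 \<sigma> ((\<eta>(a:=y)) j + t * c j))) = (\<Prod>j\<in>J. ennreal (normal_density 0 \<sigma> (\<eta> j + t * c j)))"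
        using insert.hyps by (intro prod.cong) auto
      then show ?thesis using insert.hyps by (simp add: add.commute)
    qed
    show "H (\<lambda>j\<in>J. \<eta> j + t * c j) * (\<Prod>j\<in>J. ennreal (normal_density 0 \<sigma> (\<eta> j + t * c j))) =
       (\<integral>\<^sup>+y. G (\<lambda>j\<in>insert a J. (\<eta>(a:=y)) j + t * c j) * (\<Prod>j\<in>insert a J. ennreal (normal_density 0 \<sigma> ((\<eta>(a:=y)) j + t * c j))) \<partial>lborel)"
      unfolding e1 e2 H_def
      by (subst nn_integral_multc[symmetric]) (auto simp: mult_ac intro!: nn_integral_cong)
  qed
  also have "\<dots> = (\<integral>\<^sup>+\<eta>. G (\<lambda>j\<in>insert a J. \<eta> j + t * c j) * (\<Prod>j\<in>insert a J. ennreal (normal_density 0 \<sigma> (\<eta> j + t * c j))) \<partial>PiM (insert a J) (\<lambda>_. lborel))"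
    using insert by (subst Q.product_nn_integral_insert) auto
  finally show ?case .
qed


lemma repr:
  fixes \<sigma> :: real and n k0 :: nat and cc :: "nat \<Rightarrow> real"
  assumes \<sigma>: "\<sigma> > 0" and k0: "k0 < n"
    and F[measurable]: "F \<in> borel_measurable (PiM {..<n} (\<lambda>_. borel))"
  shows "(\<integral>\<^sup>+\<xi>. F \<xi> \<partial>PiM {..<n} (\<lambda>_. Nd \<sigma>)) =
    (\<integral>\<^sup>+\<eta>. (\<integral>\<^sup>+t. F ((\<lambda>j\<in>{..<n}-{k0}. \<eta> j + t * cc j)(k0 := t)) *
        (ennreal (normal_density 0 \<sigma> t) * (\<Prod>j\<in>{..<n}-{k0}. ennreal (normal_density 0 \<sigma> (\<eta> j + t * cc j)))) \<partial>lborel)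
      \<partial>PiM ({..<n}-{k0}) (\<lambda>_. lborel))"
proof -
  define J where "J = {..<n} - {k0}"
  have IJ: "{..<n} = insert k0 J" and kJ: "k0 \<notin> J" and fJ: "finite J" using k0 by (auto simp: J_def)
  interpret P: product_sigma_finite "\<lambda>_::nat. Nd \<sigma>" by (rule prod_Nd[OF \<sigma>])
  interpret Q: product_sigma_finite "\<lambda>_::nat. lborel::real measure" by (rule prod_lborel)
  interpret PJ: finite_product_sigma_finite "\<lambda>_::nat. Nd \<sigma>" J using fJ by unfold_locales
  interpret QJ: finite_product_sigma_finite "\<lambda>_::nat. lborel::real measure" J using fJ by unfold_locales
  interpret QL: pair_sigma_finite "PiM J (\<lambda>_::nat. lborel::real measure)" "lborel::real measure" by unfold_locales
  have F': "F \<in> borel_measurable (PiM (insert k0 J) (\<lambda>_. borel))" using F IJ by simp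
  have m1: "(\<lambda>p. (snd p)(k0 := fst p)) \<in> measurable (lborel \<Otimes>\<^sub>M PiM J (\<lambda>_. Nd \<sigma>)) (PiM (insert k0 J) (\<lambda>_. borel))"
    by (rule measurable_fun_upd[where J=J]) auto
  have m2: "(\<lambda>p. (\<lambda>j\<in>J. fst p j + snd p * cc j)(k0 := snd p)) \<in> measurable (PiM J (\<lambda>_. lborel) \<Otimes>\<^sub>M lborel) (PiM (insert k0 J) (\<lambda>_. borel))"
    by (rule measurable_fun_upd[where J=J]) auto
  have "(\<integral>\<^sup>+\<xi>. F \<xi> \<partial>PiM {..<n} (\<lambda>_. Nd \<sigma>)) = (\<integral>\<^sup>+t. (\<integral>\<^sup>+x. F (x(k0 := t)) \<partial>PiM J (\<lambda>_. Nd \<sigma>)) \<partial>Nd \<sigma>)"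
    unfolding IJ using fJ kJ F' by (subst P.product_nn_integral_insert_rev) auto
  also have "\<dots> = (\<integral>\<^sup>+t. ennreal (normal_density 0 \<sigma> t) * (\<integral>\<^sup>+x. F (x(k0 := t)) \<partial>PiM J (\<lambda>_. Nd \<sigma>)) \<partial>lborel)"
  proof (rule nn_integral_density)
    show "(\<lambda>t. \<integral>\<^sup>+x. F (x(k0 := t)) \<partial>PiM J (\<lambda>_. Nd \<sigma>)) \<in> borel_measurable lborel"
      using PJ.borel_measurable_nn_integral[of "\<lambda>t x. F (x(k0 := t))" lborel]
        measurable_compose[OF m1 F'] by (simp add: case_prod_beta')
  qed auto
  also have "\<dots> = (\<integral>\<^sup>+t. (\<integral>\<^sup>+\<eta>. ennreal (normal_density 0 \<sigma> t) * (F ((\<lambda>j\<in>J. \<eta> j + t * cc j)(k0 := t)) * (\<Prod>j\<in>J. ennreal (normal_density 0 \<sigma> (\<eta> j + t * cc j)))) \<partial>PiM J (\<lambda>_. lborel)) \<partial>lborel)"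
  proof (rule nn_integral_cong)
    fix t :: real
    have mt: "(\<lambda>x. F (x(k0 := t))) \<in> borel_measurable (PiM J (\<lambda>_. borel))"
      using measurable_compose[OF measurable_fun_upd[where J=J and I="insert k0 J" and f="\<lambda>x. x" and h="\<lambda>_. t" and M="\<lambda>_. borel"] F'] by auto
    show "ennreal (normal_density 0 \<sigma> t) * (\<integral>\<^sup>+x. F (x(k0 := t)) \<partial>PiM J (\<lambda>_. Nd \<sigma>)) = (\<integral>\<^sup>+\<eta>. ennreal (normal_density 0 \<sigma> t) * (F ((\<lambda>j\<in>J. \<eta> j + t * cc j)(k0 := t)) * (\<Prod>j\<in>J. ennreal (normal_density 0 \<sigma> (\<eta> j + t * cc j)))) \<partial>PiM J (\<lambda>_. lborel))"
    proof -
      have mu: "(\<lambda>\<eta>. (\<lambda>j\<in>J. \<eta> j + t * cc j)(k0 := t)) \<in> measurable (PiM J (\<lambda>_. lborel)) (PiM (insert k0 J) (\<lambda>_. borel))"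
        by (rule measurable_fun_upd[where J=J]) auto
      have mm: "(\<lambda>\<eta>. F ((\<lambda>j\<in>J. \<eta> j + t * cc j)(k0 := t)) * (\<Prod>j\<in>J. ennreal (normal_density 0 \<sigma> (\<eta> j + t * cc j)))) \<in> borel_measurable (PiM J (\<lambda>_. lborel))"
        using measurable_compose[OF mu F'] by measurable
      show ?thesis
        by (subst shift_gauss[OF \<sigma> fJ mt, of t cc]) (simp add: nn_integral_cmult[OF mm])
    qed
  qed
  also have "\<dots> = (\<integral>\<^sup>+\<eta>. (\<integral>\<^sup>+t. ennreal (normal_density 0 \<sigma> t) * (F ((\<lambda>j\<in>J. \<eta> j + t * cc j)(k0 := t)) * (\<Prod>j\<in>J. ennreal (normal_density 0 \<sigma> (\<eta> j + t * cc j)))) \<partial>lborel) \<partial>PiM J (\<lambda>_. lborel))"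
  proof (rule QL.Fubini')
    show "(\<lambda>(\<eta>,t). ennreal (normal_density 0 \<sigma> t) * (F ((\<lambda>j\<in>J. \<eta> j + t * cc j)(k0 := t)) * (\<Prod>j\<in>J. ennreal (normal_density 0 \<sigma> (\<eta> j + t * cc j))))) \<in> borel_measurable (PiM J (\<lambda>_. lborel) \<Otimes>\<^sub>M lborel)"
      using measurable_compose[OF m2 F'] by (simp add: case_prod_beta')
  qed
  finally show ?thesis unfolding J_def by (simp add: mult_ac)
qed


lemma core:
  fixes n m :: nat and \<sigma> :: real and u :: "nat \<Rightarrow> real" and A :: "nat \<Rightarrow> nat \<Rightarrow> real" and h :: "(nat \<Rightarrow> real) \<Rightarrow> real"
  assumes \<sigma>: "\<sigma> > 0" and orth: "\<And>j. j < m \<Longrightarrow> (\<Sum>k<n. A j k * u k) = 0"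
    and hm[measurable]: "h \<in> borel_measurable (PiM {..<m} (\<lambda>_. borel))"
  shows "ennreal (\<sigma>\<^sup>2 * (\<Sum>k<n. (u k)\<^sup>2)) \<le> (\<integral>\<^sup>+\<xi>. ennreal (((\<Sum>k<n. u k * \<xi> k) + h (\<lambda>j\<in>{..<m}. \<Sum>k<n. A j k * \<xi> k))\<^sup>2) \<partial>PiM {..<n} (\<lambda>_. Nd \<sigma>))"
proof (cases "\<forall>k<n. u k = 0")
  case True then show ?thesis by simp
next
  case False
  then obtain k0 where k0: "k0 < n" and uk0: "u k0 \<noteq> 0" by auto
  define J where "J = {..<n} - {k0}"
  have IJ: "{..<n} = insert k0 J" and kJ: "k0 \<notin> J" and fJ: "finite J" using k0 by (auto simp: J_def)
  define cc where "cc j = u j / u k0" for j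
  define S where "S = (\<Sum>k<n. (u k)\<^sup>2)"
  define \<phi> where "\<phi> = normal_density 0 \<sigma>"
  define Phi where "Phi t \<eta> = (\<lambda>j\<in>J. \<eta> j + t * cc j)(k0 := t)" for t \<eta>
  define K where "K t \<eta> = ennreal (\<phi> t) * (\<Prod>j\<in>J. ennreal (\<phi> (\<eta> j + t * cc j)))" for t \<eta>
  define F0 where "F0 \<xi> = ennreal (((\<Sum>k<n. u k * \<xi> k) + h (\<lambda>j\<in>{..<m}. \<Sum>k<n. A j k * \<xi> k))\<^sup>2)" for \<xi>
  have mF0: "F0 \<in> borel_measurable (PiM {..<n} (\<lambda>_. borel))"
    unfolding F0_def by measurable
  have R0: "(\<integral>\<^sup>+\<xi>. F0 \<xi> \<partial>PiM {..<n} (\<lambda>_. Nd \<sigma>)) = (\<integral>\<^sup>+\<eta>. (\<integral>\<^sup>+t. F0 (Phi t \<eta>) * K t \<eta> \<partial>lborel) \<partial>PiM J (\<lambda>_. lborel))"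
    unfolding Phi_def K_def J_def \<phi>_def by (rule repr[OF \<sigma> k0 mF0])
  have R1: "(\<integral>\<^sup>+\<xi>. 1 \<partial>PiM {..<n} (\<lambda>_. Nd \<sigma>)) = (\<integral>\<^sup>+\<eta>. (\<integral>\<^sup>+t. K t \<eta> \<partial>lborel) \<partial>PiM J (\<lambda>_. lborel))"
    using repr[OF \<sigma> k0, of "\<lambda>_. 1" cc] unfolding Phi_def K_def J_def \<phi>_def by simp
  have prob: "prob_space (PiM {..<n} (\<lambda>_. Nd \<sigma>))"
    by (rule prob_space_PiM) (rule prob_space_normal_density[OF \<sigma>])
  have one: "(\<integral>\<^sup>+\<xi>. 1 \<partial>PiM {..<n} (\<lambda>_. Nd \<sigma>)) = 1"
    using prob by (simp add: prob_space.emeasure_space_1)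
  have Spos: "S > 0"
  proof -
    have "(u k0)\<^sup>2 \<le> S" unfolding S_def using k0 by (intro member_le_sum) auto
    then show ?thesis using uk0 by (smt (verit) zero_less_power2)
  qed
  have inner: "ennreal (\<sigma>\<^sup>2 * S) * (\<integral>\<^sup>+t. K t \<eta> \<partial>lborel) \<le> (\<integral>\<^sup>+t. F0 (Phi t \<eta>) * K t \<eta> \<partial>lborel)" for \<eta>
  proof -
    define \<alpha> where "\<alpha> = S / u k0"
    define \<beta> where "\<beta> = (\<Sum>j\<in>J. u j * \<eta> j) + h (\<lambda>j'\<in>{..<m}. \<Sum>k\<in>J. A j' k * \<eta> k)"
    define a where "a = 1 + (\<Sum>j\<in>J. (cc j)\<^sup>2)"
    define b where "b = (\<Sum>j\<in>J. cc j * \<eta> j)"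
    define c where "c = (\<Sum>j\<in>J. (\<eta> j)\<^sup>2)"
    define C1 where "C1 = 1 / sqrt (2 * pi * \<sigma>\<^sup>2)"
    define C where "C = C1 ^ (card J + 1)"
    have C0: "C \<ge> 0" unfolding C_def C1_def by simp
    have sumPhi: "(\<Sum>k<n. w k * Phi t \<eta> k) = w k0 * t + (\<Sum>j\<in>J. w j * (\<eta> j + t * cc j))" for w t
    proof -
      have "(\<Sum>k<n. w k * Phi t \<eta> k) = w k0 * Phi t \<eta> k0 + (\<Sum>j\<in>J. w j * Phi t \<eta> j)"
        unfolding IJ using fJ kJ by (simp add: sum.insert)
      also have "(\<Sum>j\<in>J. w j * Phi t \<eta> j) = (\<Sum>j\<in>J. w j * (\<eta> j + t * cc j))"
        using kJ by (intro sum.cong) (auto simp: Phi_def)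
      finally show ?thesis by (simp add: Phi_def)
    qed
    have SJ: "S = (u k0)\<^sup>2 + (\<Sum>j\<in>J. (u j)\<^sup>2)"
      unfolding S_def IJ using fJ kJ by (simp add: sum.insert)
    have Fe: "F0 (Phi t \<eta>) = ennreal ((\<alpha> * t + \<beta>)\<^sup>2)" for t
    proof -
      have e1: "(\<Sum>k<n. u k * Phi t \<eta> k) = \<alpha> * t + (\<Sum>j\<in>J. u j * \<eta> j)"
      proof -
        have "(\<Sum>j\<in>J. u j * (\<eta> j + t * cc j)) = (\<Sum>j\<in>J. u j * \<eta> j) + t * (\<Sum>j\<in>J. (u j)\<^sup>2) / u k0"
          by (simp add: cc_def algebra_simps sum.distrib sum_distrib_left sum_divide_distrib power2_eq_square)
        moreover have "u k0 * t + t * (\<Sum>j\<in>J. (u j)\<^sup>2) / u k0 = \<alpha> * t"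
          unfolding \<alpha>_def SJ using uk0 by (simp add: field_simps power2_eq_square)
        ultimately show ?thesis by (simp add: sumPhi)
      qed
      have e2: "(\<Sum>k<n. A j' k * Phi t \<eta> k) = (\<Sum>k\<in>J. A j' k * \<eta> k)" if "j' < m" for j'
      proof -
        have o: "A j' k0 * u k0 + (\<Sum>k\<in>J. A j' k * u k) = 0"
          using orth[OF that] unfolding IJ using fJ kJ by (simp add: sum.insert)
        have "(\<Sum>k\<in>J. A j' k * (\<eta> k + t * cc k)) = (\<Sum>k\<in>J. A j' k * \<eta> k) + t / u k0 * (\<Sum>k\<in>J. A j' k * u k)"
          by (simp add: cc_def algebra_simps sum.distrib sum_distrib_left sum_divide_distrib)
        moreover have "A j' k0 * t + t / u k0 * (\<Sum>k\<in>J. A j' k * u k) = t / u k0 * (A j' k0 * u k0 + (\<Sum>k\<in>J. A j' k * u k))"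
          using uk0 by (simp add: field_simps)
        ultimately show ?thesis using o by (simp add: sumPhi)
      qed
      have "(\<lambda>j\<in>{..<m}. \<Sum>k<n. A j k * Phi t \<eta> k) = (\<lambda>j'\<in>{..<m}. \<Sum>k\<in>J. A j' k * \<eta> k)"
        using e2 by (auto simp: fun_eq_iff)
      then show ?thesis unfolding F0_def e1 \<beta>_def by (simp add: add.assoc)
    qed
    have Ke: "K t \<eta> = ennreal (C * exp (-(a*t\<^sup>2 + 2*b*t + c)/(2*\<sigma>\<^sup>2)))" for t
    proof -
      have ph: "\<phi> x = C1 * exp (- x\<^sup>2 / (2 * \<sigma>\<^sup>2))" for x
        unfolding \<phi>_def normal_density_def C1_def by simp
      have "K t \<eta> = ennreal (\<phi> t * (\<Prod>j\<in>J. \<phi> (\<eta> j + t * cc j)))"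
        unfolding K_def by (simp add: prod_ennreal ennreal_mult \<phi>_def prod_nonneg)
      also have "\<phi> t * (\<Prod>j\<in>J. \<phi> (\<eta> j + t * cc j)) = C * (exp (- t\<^sup>2 / (2 * \<sigma>\<^sup>2)) * exp (\<Sum>j\<in>J. - (\<eta> j + t * cc j)\<^sup>2 / (2 * \<sigma>\<^sup>2)))"
        unfolding ph C_def using fJ by (simp add: prod.distrib exp_sum)
      also have "exp (- t\<^sup>2 / (2 * \<sigma>\<^sup>2)) * exp (\<Sum>j\<in>J. - (\<eta> j + t * cc j)\<^sup>2 / (2 * \<sigma>\<^sup>2)) = exp (-(a*t\<^sup>2 + 2*b*t + c)/(2*\<sigma>\<^sup>2))"
      proof -
        have that: "(\<Sum>j\<in>J. (\<eta> j + t * cc j)\<^sup>2) = (\<Sum>j\<in>J. (cc j)\<^sup>2) * t\<^sup>2 + 2 * b * t + c"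
          unfolding b_def c_def
          by (simp add: power2_sum sum.distrib sum_distrib_left sum_distrib_right algebra_simps power_mult_distrib)
        have "- t\<^sup>2 / (2 * \<sigma>\<^sup>2) + (\<Sum>j\<in>J. - (\<eta> j + t * cc j)\<^sup>2 / (2 * \<sigma>\<^sup>2)) = -(a*t\<^sup>2 + 2*b*t + c)/(2*\<sigma>\<^sup>2)"
        proof -
          have "(\<Sum>j\<in>J. - (\<eta> j + t * cc j)\<^sup>2 / (2 * \<sigma>\<^sup>2)) = - (\<Sum>j\<in>J. (\<eta> j + t * cc j)\<^sup>2) / (2 * \<sigma>\<^sup>2)"
            by (simp add: sum_divide_distrib[symmetric] sum_negf)
          moreover have "- t\<^sup>2 / (2 * \<sigma>\<^sup>2) + - ((\<Sum>j\<in>J. (cc j)\<^sup>2) * t\<^sup>2 + 2 * b * t + c) / (2 * \<sigma>\<^sup>2) = -(a*t\<^sup>2 + 2*b*t + c)/(2*\<sigma>\<^sup>2)"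
            unfolding a_def by (simp add: add_divide_distrib[symmetric] algebra_simps)
          ultimately show ?thesis using that by simp
        qed
        then show ?thesis by (simp add: exp_add[symmetric])
      qed
      finally show ?thesis .
    qed
    have apos: "a > 0" unfolding a_def by (simp add: add_pos_nonneg sum_nonneg)
    have key: "\<alpha>\<^sup>2 * \<sigma>\<^sup>2 / a = \<sigma>\<^sup>2 * S"
    proof -
      have "a = S / (u k0)\<^sup>2"
        unfolding a_def SJ cc_def using uk0 by (simp add: field_simps power_divide sum_divide_distrib[symmetric])
      then show ?thesis unfolding \<alpha>_def using uk0 Spos by (simp add: field_simps power2_eq_square)
    qed
    have "ennreal (\<alpha>\<^sup>2 * \<sigma>\<^sup>2 / a) * (\<integral>\<^sup>+t. ennreal (C * exp (-(a*t\<^sup>2 + 2*b*t + c)/(2*\<sigma>\<^sup>2))) \<partial>lborel)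
     \<le> (\<integral>\<^sup>+t. ennreal (C * ((\<alpha>*t+\<beta>)\<^sup>2 * exp (-(a*t\<^sup>2 + 2*b*t + c)/(2*\<sigma>\<^sup>2)))) \<partial>lborel)"
      by (rule gauss1d[OF \<sigma> apos C0])
    also have "\<dots> = (\<integral>\<^sup>+t. F0 (Phi t \<eta>) * K t \<eta> \<partial>lborel)"
      unfolding Fe Ke using C0 by (intro nn_integral_cong) (simp add: ennreal_mult[symmetric] mult_ac)
    finally show ?thesis unfolding key Ke .
  qed
  have "ennreal (\<sigma>\<^sup>2 * S) = ennreal (\<sigma>\<^sup>2 * S) * (\<integral>\<^sup>+\<eta>. (\<integral>\<^sup>+t. K t \<eta> \<partial>lborel) \<partial>PiM J (\<lambda>_. lborel))"
    using R1 one by simp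
  also have "\<dots> = (\<integral>\<^sup>+\<eta>. ennreal (\<sigma>\<^sup>2 * S) * (\<integral>\<^sup>+t. K t \<eta> \<partial>lborel) \<partial>PiM J (\<lambda>_. lborel))"
  proof (rule nn_integral_cmult[symmetric])
    have "(\<lambda>(\<eta>,t). K t \<eta>) \<in> borel_measurable (PiM J (\<lambda>_. lborel) \<Otimes>\<^sub>M lborel)"
      unfolding K_def \<phi>_def by measurable
    then show "(\<lambda>\<eta>. \<integral>\<^sup>+t. K t \<eta> \<partial>lborel) \<in> borel_measurable (PiM J (\<lambda>_. lborel))"
      by (rule lborel.borel_measurable_nn_integral)
  qed
  also have "\<dots> \<le> (\<integral>\<^sup>+\<eta>. (\<integral>\<^sup>+t. F0 (Phi t \<eta>) * K t \<eta> \<partial>lborel) \<partial>PiM J (\<lambda>_. lborel))"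
    by (intro nn_integral_mono inner)
  also have "\<dots> = (\<integral>\<^sup>+\<xi>. F0 \<xi> \<partial>PiM {..<n} (\<lambda>_. Nd \<sigma>))" using R0 by simp
  finally show ?thesis unfolding S_def F0_def .
qed
lemma gram_entry:
  fixes L :: "real mat"
  assumes "L \<in> carrier_mat n n" "r < n" "s < n"
  shows "(L * transpose_mat L) $$ (r,s) = (\<Sum>k<n. L$$(r,k) * L$$(s,k))"
  using assms by (simp add: scalar_prod_def atLeast0LessThan)

lemma TG_row_data:
  assumes "i < 2*N" "c < 2*(N+M)"
  shows "TG N M G $$ (i,c) = (if c = i then sqrt (G (i div 2)) else if c = 2*N+i then sqrt (G (i div 2) - 1) * zsgn (i mod 2) else 0)"
  using assms by (simp add: TG_def)

lemma TG_row_anc: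
  assumes "j < 2*M" "c < 2*(N+M)"
  shows "TG N M G $$ (2*N+j,c) = (if j < 2*N then (if c = 2*N+j then sqrt (G (j div 2)) else if c = j then sqrt (G (j div 2) - 1) * zsgn (j mod 2) else 0) else (if c = 2*N+j then 1 else 0))"
  using assms by (auto simp: TG_def)

lemma TG_H1:
  assumes "i < 2*N" "N \<le> M"
  shows "(\<Sum>c<2*(N+M). TG N M G $$ (i,c) * X c) = sqrt (G (i div 2)) * X i + sqrt (G (i div 2) - 1) * zsgn (i mod 2) * X (2*N+i)"
proof -
  have "(\<Sum>c<2*(N+M). TG N M G $$ (i,c) * X c) = (\<Sum>c<2*(N+M). (if c = i then sqrt (G (i div 2)) * X i else 0) + (if c = 2*N+i then sqrt (G (i div 2) - 1) * zsgn (i mod 2) * X (2*N+i) else 0))"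
    using assms by (intro sum.cong) (auto simp: TG_row_data)
  also have "\<dots> = sqrt (G (i div 2)) * X i + sqrt (G (i div 2) - 1) * zsgn (i mod 2) * X (2*N+i)"
    using assms by (simp add: sum.distrib)
  finally show ?thesis .
qed

lemma TG_H2:
  assumes "i < 2*N" "N \<le> M"
  shows "(\<Sum>c<2*(N+M). TG N M G $$ (2*N+i,c) * X c) = sqrt (G (i div 2)) * X (2*N+i) + sqrt (G (i div 2) - 1) * zsgn (i mod 2) * X i"
proof -
  have "(\<Sum>c<2*(N+M). TG N M G $$ (2*N+i,c) * X c) = (\<Sum>c<2*(N+M). (if c = 2*N+i then sqrt (G (i div 2)) * X (2*N+i) else 0) + (if c = i then sqrt (G (i div 2) - 1) * zsgn (i mod 2) * X i else 0))"
    using assms by (intro sum.cong) (auto simp: TG_row_anc)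
  also have "\<dots> = sqrt (G (i div 2)) * X (2*N+i) + sqrt (G (i div 2) - 1) * zsgn (i mod 2) * X i"
    using assms by (simp add: sum.distrib)
  finally show ?thesis .
qed

lemma zsgn_sq: "(zsgn a)\<^sup>2 = 1" by (simp add: zsgn_def)

lemma TG_gram:
  assumes i: "i < 2*N" and NM: "N \<le> M" and G1: "G (i div 2) \<ge> 1"
  defines "Q \<equiv> \<lambda>r s. (\<Sum>c<2*(N+M). TG N M G $$ (r,c) * TG N M G $$ (s,c))"
  shows "Q i i = 2 * G (i div 2) - 1"
    and "Q (2*N+i) i = 2 * sqrt (G (i div 2)) * sqrt (G (i div 2) - 1) * zsgn (i mod 2)"
    and "Q (2*N+i) (2*N+i) = 2 * G (i div 2) - 1"
    and "\<And>j. j < 2*M \<Longrightarrow> j \<noteq> i \<Longrightarrow> Q (2*N+j) i = 0"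
    and "\<And>j. j < 2*M \<Longrightarrow> j \<noteq> i \<Longrightarrow> Q (2*N+j) (2*N+i) = 0"
proof -
  let ?g = "G (i div 2)" and ?z = "zsgn (i mod 2)"
  have sg: "sqrt ?g * sqrt ?g = ?g" "sqrt (?g - 1) * sqrt (?g - 1) = ?g - 1" "\<bar>?g\<bar> = ?g" "\<bar>?g - 1\<bar> = ?g - 1" using G1 by auto
  have z2: "?z * ?z = 1" using zsgn_sq[of "i mod 2"] by (simp add: power2_eq_square)
  have iK: "i < 2*(N+M)" "2*N+i < 2*(N+M)" using i NM by auto
  have Qc: "Q r s = (\<Sum>c<2*(N+M). TG N M G $$ (s,c) * TG N M G $$ (r,c))" for r s
    unfolding Q_def by (simp add: mult.commute)
  have e1: "TG N M G $$ (2*N+i, i) = sqrt (?g - 1) * ?z" and e2: "TG N M G $$ (2*N+i, 2*N+i) = sqrt ?g"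
    using TG_row_anc[of i M "2*N+i" N G] TG_row_anc[of i M i N G] iK i NM by auto
  have e3: "TG N M G $$ (i, i) = sqrt ?g" and e4: "TG N M G $$ (i, 2*N+i) = sqrt (?g - 1) * ?z"
    using TG_row_data[of i N i M G] TG_row_data[of i N "2*N+i" M G] iK i by auto
  have e5: "TG N M G $$ (2*N+j, i) = 0" "TG N M G $$ (2*N+j, 2*N+i) = 0" if "j < 2*M" "j \<noteq> i" for j
    using TG_row_anc[of j M i N G] TG_row_anc[of j M "2*N+i" N G] iK i that by auto
  show "Q i i = 2 * ?g - 1"
    unfolding Q_def TG_H1[OF i NM] e3 e4
    by (simp add: algebra_simps sg z2 mult.assoc[symmetric])
  show "Q (2*N+i) i = 2 * sqrt ?g * sqrt (?g - 1) * ?z"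
    unfolding Qc TG_H1[OF i NM] e1 e2
    by (simp add: algebra_simps)
  show "Q (2*N+i) (2*N+i) = 2 * ?g - 1"
    unfolding Q_def TG_H2[OF i NM] e1 e2
    by (simp add: algebra_simps sg z2 mult.assoc[symmetric])
  show "Q (2*N+j) i = 0" if "j < 2*M" "j \<noteq> i" for j
    unfolding Qc TG_H1[OF i NM] e5[OF that] by simp
  show "Q (2*N+j) (2*N+i) = 0" if "j < 2*M" "j \<noteq> i" for j
    unfolding Qc TG_H2[OF i NM] e5[OF that] by simp
qed

lemma sum_div2: fixes n :: nat shows "(\<Sum>i<2*n. g (i div 2)) = (\<Sum>i<n. 2 * (g i :: real))"
  by (induction n) (simp_all add: sum.lessThan_Suc)

theorem theorem2:
  fixes N M K :: nat and \<sigma> :: real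
    and S_enc S_inv Lam_d Lam_a :: "real mat" and G :: "nat \<Rightarrow> real"
    and f :: "(nat \<Rightarrow> real) \<Rightarrow> (nat \<Rightarrow> real)"
  assumes "N \<ge> 1" and "M \<ge> N" and "K = N + M" and "\<sigma> > 0"
    and "symplectic K S_enc"
    and "S_inv \<in> carrier_mat (2*K) (2*K)" and "S_inv * S_enc = 1\<^sub>m (2*K)"
    and "symplectic N Lam_d" and "symplectic M Lam_a"
    and "\<And>i. i < N \<Longrightarrow> G i \<ge> 1"
    and "dsum Lam_d Lam_a * S_inv * transpose_mat S_inv * transpose_mat (dsum Lam_d Lam_a)
           = TG N M G * transpose_mat (TG N M G)"
    and "f \<in> (\<Pi>\<^sub>M j\<in>{..<2*M}. borel) \<rightarrow>\<^sub>M (\<Pi>\<^sub>M i\<in>{..<2*N}. borel)"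
  shows "(\<integral>\<^sup>+ \<xi>. ennreal (\<Sum>i<2*N.
            ((\<Sum>k<2*K. (dsum Lam_d Lam_a * S_inv) $$ (i,k) * \<xi> k)
             - f (\<lambda>j\<in>{..<2*M}. \<Sum>k<2*K. (dsum Lam_d Lam_a * S_inv) $$ (2*N+j,k) * \<xi> k) i)\<^sup>2)
          \<partial>(\<Pi>\<^sub>M k\<in>{..<2*K}. density lborel (normal_density 0 \<sigma>)))
         \<ge> ennreal (\<Sum>i<N. 2 * \<sigma>\<^sup>2 / (2 * G i - 1))"
proof -
  note fm[measurable] = assms(12)
  have \<sigma>: "\<sigma> > 0" using assms(4) .
  have NM: "N \<le> M" using assms(2) .
  have K: "K = N + M" using assms(3) .
  define L where "L = dsum Lam_d Lam_a * S_inv"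
  define Q where "Q = (\<lambda>r s. (\<Sum>c<2*(N+M). TG N M G $$ (r,c) * TG N M G $$ (s,c)))"
  have cLd: "Lam_d \<in> carrier_mat (2*N) (2*N)" using assms(8) by (simp add: symplectic_def)
  have cLa: "Lam_a \<in> carrier_mat (2*M) (2*M)" using assms(9) by (simp add: symplectic_def)
  have cD: "dsum Lam_d Lam_a \<in> carrier_mat (2*K) (2*K)"
    using four_block_carrier_mat[OF cLd cLa, of "0\<^sub>m (dim_row Lam_d) (dim_col Lam_a)" "0\<^sub>m (dim_row Lam_a) (dim_col Lam_d)"] K
    unfolding dsum_def by (simp add: algebra_simps)
  have cS: "S_inv \<in> carrier_mat (2*K) (2*K)" using assms(6) .
  have cL: "L \<in> carrier_mat (2*K) (2*K)" unfolding L_def using cD cS by simp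
  have cT: "TG N M G \<in> carrier_mat (2*K) (2*K)" unfolding TG_def K by simp
  have LL: "L * transpose_mat L = TG N M G * transpose_mat (TG N M G)"
  proof -
    have "L * transpose_mat L = L * (transpose_mat S_inv * transpose_mat (dsum Lam_d Lam_a))"
      unfolding L_def using cD cS by (simp add: transpose_mult)
    also have "\<dots> = L * transpose_mat S_inv * transpose_mat (dsum Lam_d Lam_a)"
      using cL cD cS by (simp add: assoc_mult_mat[of L "2*K" "2*K" "transpose_mat S_inv" "2*K" "transpose_mat (dsum Lam_d Lam_a)" "2*K"])
    finally show ?thesis using assms(11) unfolding L_def by simp
  qed
  have P: "(\<Sum>k<2*K. L$$(r,k) * L$$(s,k)) = Q r s" if "r < 2*K" "s < 2*K" for r s
  proof -
    have "(\<Sum>k<2*K. L$$(r,k) * L$$(s,k)) = (L * transpose_mat L) $$ (r,s)"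
      using gram_entry[OF cL that] by simp
    also have "\<dots> = (TG N M G * transpose_mat (TG N M G)) $$ (r,s)" using LL by simp
    also have "\<dots> = Q r s" unfolding Q_def using gram_entry[OF cT that] K by simp
    finally show ?thesis .
  qed
  define ya where "ya \<xi> = (\<lambda>j\<in>{..<2*M}. \<Sum>k<2*K. L $$ (2*N+j,k) * \<xi> k)" for \<xi> :: "nat \<Rightarrow> real"
  have bound: "ennreal (\<sigma>\<^sup>2 / (2 * G (i div 2) - 1)) \<le> (\<integral>\<^sup>+\<xi>. ennreal (((\<Sum>k<2*K. L $$ (i,k) * \<xi> k) - f (ya \<xi>) i)\<^sup>2) \<partial>PiM {..<2*K} (\<lambda>_. Nd \<sigma>))"
    if i: "i < 2*N" for i
  proof -
    define g where "g = G (i div 2)"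
    define z where "z = zsgn (i mod 2)"
    define w where "w = 2 * sqrt g * sqrt (g - 1) * z"
    define d where "d = 2 * g - 1"
    define \<beta> where "\<beta> = w / d"
    have g1: "g \<ge> 1" unfolding g_def using assms(10)[of "i div 2"] i by auto
    have d0: "d > 0" unfolding d_def using g1 by simp
    have iM: "i < 2*M" using i NM by simp
    have iK: "i < 2*K" "2*N+i < 2*K" using i NM K by auto
    have g1G: "G (i div 2) \<ge> 1" using g1 unfolding g_def .
    note TQ = TG_gram[where G=G, OF i NM g1G]
    have TQ1: "Q i i = d" "Q (2*N+i) i = w" "Q (2*N+i) (2*N+i) = d"
      using TQ unfolding d_def w_def g_def z_def Q_def by auto
    define u where "u k = L $$ (i,k) - \<beta> * L $$ (2*N+i,k)" for k
    define A where "A j k = L $$ (2*N+j,k)" for j k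
    define h where "h v = \<beta> * v i - f v i" for v :: "nat \<Rightarrow> real"
    have orth: "(\<Sum>k<2*K. A j k * u k) = 0" if j: "j < 2*M" for j
    proof -
      have jK: "2*N+j < 2*K" using j K by simp
      have "(\<Sum>k<2*K. A j k * u k) = (\<Sum>k<2*K. L $$ (2*N+j,k) * L $$ (i,k)) - \<beta> * (\<Sum>k<2*K. L $$ (2*N+j,k) * L $$ (2*N+i,k))"
        unfolding A_def u_def by (simp add: algebra_simps sum_subtractf sum_distrib_left)
      also have "\<dots> = Q (2*N+j) i - \<beta> * Q (2*N+j) (2*N+i)" using P jK iK by simp
      also have "\<dots> = 0"
      proof (cases "j = i")
        case True then show ?thesis using TQ1 d0 by (simp add: \<beta>_def)
      next
        case False then show ?thesis using TQ(4,5)[OF j] unfolding Q_def by simp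
      qed
      finally show ?thesis .
    qed
    have hm: "h \<in> borel_measurable (PiM {..<2*M} (\<lambda>_. borel))"
    proof -
      have "(\<lambda>v. f v i) \<in> borel_measurable (PiM {..<2*M} (\<lambda>_. borel))"
        using measurable_compose[OF fm measurable_component_singleton[of i "{..<2*N}" "\<lambda>_. borel"]] i by simp
      moreover have "(\<lambda>v. v i) \<in> borel_measurable (PiM {..<2*M} (\<lambda>_. borel::real measure))"
        using measurable_component_singleton[of i "{..<2*M}" "\<lambda>_. borel"] iM by simp
      ultimately show ?thesis unfolding h_def by measurable
    qed
    have C: "ennreal (\<sigma>\<^sup>2 * (\<Sum>k<2*K. (u k)\<^sup>2)) \<le> (\<integral>\<^sup>+\<xi>. ennreal (((\<Sum>k<2*K. u k * \<xi> k) + h (\<lambda>j\<in>{..<2*M}. \<Sum>k<2*K. A j k * \<xi> k))\<^sup>2) \<partial>PiM {..<2*K} (\<lambda>_. Nd \<sigma>))"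
      by (rule core[OF \<sigma> orth hm])
    have usq: "(\<Sum>k<2*K. (u k)\<^sup>2) = 1 / d"
    proof -
      have "(\<Sum>k<2*K. (u k)\<^sup>2) = (\<Sum>k<2*K. L $$ (i,k) * L $$ (i,k)) - 2 * \<beta> * (\<Sum>k<2*K. L $$ (2*N+i,k) * L $$ (i,k)) + \<beta>\<^sup>2 * (\<Sum>k<2*K. L $$ (2*N+i,k) * L $$ (2*N+i,k))"
        unfolding u_def by (simp add: power2_eq_square algebra_simps sum_subtractf sum.distrib sum_distrib_left)
      also have "\<dots> = d - 2 * \<beta> * w + \<beta>\<^sup>2 * d" using P iK TQ1 by simp
      also have "\<dots> = 1 / d"
      proof -
        have zz: "z * z = 1" unfolding z_def using zsgn_sq[of "i mod 2"] by (simp add: power2_eq_square)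
        have ww: "w * w = 4 * g * (g - 1)"
        proof -
          have "w * w = 4 * (sqrt g * sqrt g) * (sqrt (g-1) * sqrt (g-1)) * (z * z)"
            unfolding w_def by (simp add: algebra_simps)
          then show ?thesis using g1 zz by simp
        qed
        have "d - 2 * \<beta> * w + \<beta>\<^sup>2 * d = (d * d - w * w) / d"
          unfolding \<beta>_def using d0 by (simp add: field_simps power2_eq_square)
        also have "d * d - w * w = 1" unfolding d_def ww by (simp add: algebra_simps)
        finally show ?thesis .
      qed
      finally show ?thesis .
    qed
    have "(\<integral>\<^sup>+\<xi>. ennreal (((\<Sum>k<2*K. u k * \<xi> k) + h (\<lambda>j\<in>{..<2*M}. \<Sum>k<2*K. A j k * \<xi> k))\<^sup>2) \<partial>PiM {..<2*K} (\<lambda>_. Nd \<sigma>))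
       = (\<integral>\<^sup>+\<xi>. ennreal (((\<Sum>k<2*K. L $$ (i,k) * \<xi> k) - f (ya \<xi>) i)\<^sup>2) \<partial>PiM {..<2*K} (\<lambda>_. Nd \<sigma>))"
    proof (rule nn_integral_cong)
      fix \<xi> :: "nat \<Rightarrow> real"
      have "(\<lambda>j\<in>{..<2*M}. \<Sum>k<2*K. A j k * \<xi> k) = ya \<xi>" unfolding ya_def A_def by simp
      moreover have "ya \<xi> i = (\<Sum>k<2*K. L $$ (2*N+i,k) * \<xi> k)" unfolding ya_def using iM by simp
      moreover have "(\<Sum>k<2*K. u k * \<xi> k) = (\<Sum>k<2*K. L $$ (i,k) * \<xi> k) - \<beta> * (\<Sum>k<2*K. L $$ (2*N+i,k) * \<xi> k)"
        unfolding u_def by (simp add: algebra_simps sum_subtractf sum_distrib_left)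
      ultimately show "ennreal (((\<Sum>k<2*K. u k * \<xi> k) + h (\<lambda>j\<in>{..<2*M}. \<Sum>k<2*K. A j k * \<xi> k))\<^sup>2)
         = ennreal (((\<Sum>k<2*K. L $$ (i,k) * \<xi> k) - f (ya \<xi>) i)\<^sup>2)"
        unfolding h_def by simp
    qed
    moreover have "\<sigma>\<^sup>2 * (\<Sum>k<2*K. (u k)\<^sup>2) = \<sigma>\<^sup>2 / (2 * G (i div 2) - 1)"
      unfolding usq d_def g_def by simp
    ultimately show ?thesis using C by simp
  qed
  have mya: "ya \<in> measurable (PiM {..<2*K} (\<lambda>_. borel)) (PiM {..<2*M} (\<lambda>_. borel))"
    unfolding ya_def by measurable
  have msum: "(\<lambda>\<xi>. (((\<Sum>k<2*K. L $$ (i,k) * \<xi> k) - f (ya \<xi>) i)\<^sup>2)) \<in> borel_measurable (PiM {..<2*K} (\<lambda>_. Nd \<sigma>))"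
    if i: "i < 2*N" for i
  proof -
    have "(\<lambda>\<xi>. f (ya \<xi>) i) \<in> borel_measurable (PiM {..<2*K} (\<lambda>_. borel))"
      using measurable_compose[OF measurable_compose[OF mya fm] measurable_component_singleton[of i "{..<2*N}" "\<lambda>_. borel"]] i by simp
    then show ?thesis by measurable
  qed
  have "ennreal (\<Sum>i<N. 2 * \<sigma>\<^sup>2 / (2 * G i - 1)) = ennreal (\<Sum>i<2*N. \<sigma>\<^sup>2 / (2 * G (i div 2) - 1))"
    by (subst sum_div2) simp
  also have "\<dots> = (\<Sum>i<2*N. ennreal (\<sigma>\<^sup>2 / (2 * G (i div 2) - 1)))"
  proof (rule sum_ennreal[symmetric])
    fix i assume "i \<in> {..<2*N}"
    then have "G (i div 2) \<ge> 1" using assms(10)[of "i div 2"] by auto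
    then show "0 \<le> \<sigma>\<^sup>2 / (2 * G (i div 2) - 1)" by simp
  qed
  also have "\<dots> \<le> (\<Sum>i<2*N. (\<integral>\<^sup>+\<xi>. ennreal (((\<Sum>k<2*K. L $$ (i,k) * \<xi> k) - f (ya \<xi>) i)\<^sup>2) \<partial>PiM {..<2*K} (\<lambda>_. Nd \<sigma>)))"
    by (intro sum_mono bound) simp
  also have "\<dots> = (\<integral>\<^sup>+\<xi>. (\<Sum>i<2*N. ennreal (((\<Sum>k<2*K. L $$ (i,k) * \<xi> k) - f (ya \<xi>) i)\<^sup>2)) \<partial>PiM {..<2*K} (\<lambda>_. Nd \<sigma>))"
    by (rule nn_integral_sum[symmetric]) (simp add: msum)
  also have "\<dots> = (\<integral>\<^sup>+\<xi>. ennreal (\<Sum>i<2*N. ((\<Sum>k<2*K. L $$ (i,k) * \<xi> k) - f (ya \<xi>) i)\<^sup>2) \<partial>PiM {..<2*K} (\<lambda>_. Nd \<sigma>))"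
    by (intro nn_integral_cong sum_ennreal) simp
  finally show ?thesis unfolding L_def ya_def .
qed

end
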